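(* Let $d\ge 2$ and let $\rho$ be any density matrix on $\mathbb{C}^d$. Then $$\frac{C_{l_1}(\rho)^2}{(d-1)^2} + M_l(\rho) \le 1 .$$
   Context: Fix the computational (reference) basis $\{|i\rangle\}_{i=1}^d$ of $\mathbb{C}^d$ and write $\rho_{ij}=\langle i|\rho|j\rangle$. The $l_1$ norm of coherence is $C_{l_1}(\rho)=\sum_{i\neq j}|\rho_{ij}|$. The mixedness (normalized linear entropy) is $M_l(\rho)=\frac{d}{d-1}\left(1-\mathrm{Tr}\,\rho^2\right)$. *)

theory Defs
  imports "Jordan_Normal_Form.Matrix" "Jordan_Normal_Form.Conjugate"
begin

definition hermitian_mat :: "complex mat \<Rightarrow> bool" where
  "hermitian_mat A \<longleftrightarrow> square_mat A \<and>
     (\<forall>i < dim_row A. \<forall>j < dim_row A. A $$ (i, j) = cnj (A $$ (j, i)))"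

definition psd_mat :: "complex mat \<Rightarrow> bool" where
  "psd_mat A \<longleftrightarrow> square_mat A \<and>
     (\<forall>v \<in> carrier_vec (dim_row A).
        Im (conjugate v \<bullet> (A *\<^sub>v v)) = 0 \<and> Re (conjugate v \<bullet> (A *\<^sub>v v)) \<ge> 0)"

definition mat_trace :: "complex mat \<Rightarrow> complex" where
  "mat_trace A = (\<Sum>i<dim_row A. A $$ (i, i))"

definition density_mat :: "nat \<Rightarrow> complex mat \<Rightarrow> bool" where
  "density_mat d \<rho> \<longleftrightarrow> \<rho> \<in> carrier_mat d d \<and> hermitian_mat \<rho> \<and> psd_mat \<rho> \<and> mat_trace \<rho> = 1"

definition coh_l1 :: "complex mat \<Rightarrow> real" where
  "coh_l1 \<rho> = (\<Sum>i<dim_row \<rho>. \<Sum>j<dim_col \<rho>. if i \<noteq> j then cmod (\<rho> $$ (i, j)) else 0)"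

definition mixedness :: "nat \<Rightarrow> complex mat \<Rightarrow> real" where
  "mixedness d \<rho> = (real d / (real d - 1)) * (1 - Re (mat_trace (\<rho> * \<rho>)))"

end

theory Submission
  imports Defs
begin

lemma sum_sq_le_card:
  fixes f :: "'a \<Rightarrow> real"
  assumes "finite A"
  shows "(\<Sum>x\<in>A. f x)\<^sup>2 \<le> real (card A) * (\<Sum>x\<in>A. (f x)\<^sup>2)"
proof -
  have "0 \<le> (\<Sum>x\<in>A. \<Sum>y\<in>A. (f x - f y)\<^sup>2)"
    by (intro sum_nonneg) auto
  also have "\<dots> = (\<Sum>x\<in>A. \<Sum>y\<in>A. (f x)\<^sup>2 + (f y)\<^sup>2 - 2 * f x * f y)"
    by (simp add: power2_diff)
  also have "\<dots> = 2 * (real (card A) * (\<Sum>x\<in>A. (f x)\<^sup>2)) - 2 * (\<Sum>x\<in>A. f x)\<^sup>2"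
    by (simp add: sum_subtractf sum.distrib sum_distrib_left sum_distrib_right
        power2_eq_square mult.assoc algebra_simps)
  finally show ?thesis by simp
qed

theorem theorem1:
  fixes d :: nat and \<rho> :: "complex mat"
  assumes "d \<ge> 2" and "density_mat d \<rho>"
  shows "(coh_l1 \<rho>)\<^sup>2 / (real d - 1)\<^sup>2 + mixedness d \<rho> \<le> 1"
proof -
  have car: "\<rho> \<in> carrier_mat d d" and herm: "hermitian_mat \<rho>" and tr: "mat_trace \<rho> = 1"
    using assms(2) by (auto simp: density_mat_def)
  have dr: "dim_row \<rho> = d" and dc: "dim_col \<rho> = d" using car by auto
  have hij: "\<rho> $$ (i, j) = cnj (\<rho> $$ (j, i))" if "i < d" "j < d" for i j
    using herm that dr unfolding hermitian_mat_def by metis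
  define a where "a i = Re (\<rho> $$ (i, i))" for i
  define g where "g p = cmod (\<rho> $$ (fst p, snd p))" for p
  define A where "A = {p \<in> {..<d} \<times> {..<d}. fst p \<noteq> snd p}"
  define P where "P = Re (mat_trace (\<rho> * \<rho>))"
  define Q where "Q = (\<Sum>i<d. (a i)\<^sup>2)"
  define S where "S = (\<Sum>p\<in>A. (g p)\<^sup>2)"
  have finA: "finite A" unfolding A_def by auto
  have diag: "\<rho> $$ (i, i) = complex_of_real (a i)" if "i < d" for i
    using hij[OF that that] unfolding a_def by (simp add: complex_eq_iff)
  have suma: "(\<Sum>i<d. a i) = 1"
    using arg_cong[OF tr, of Re] dr unfolding mat_trace_def a_def by (simp add: Re_sum)
  have Qge: "1 \<le> real d * Q"
    using sum_sq_le_card[of "{..<d}" a] suma unfolding Q_def by simp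
  have cohA: "coh_l1 \<rho> = (\<Sum>p\<in>A. g p)"
  proof -
    have "coh_l1 \<rho> = (\<Sum>p\<in>{..<d}\<times>{..<d}. if fst p \<noteq> snd p then g p else 0)"
      unfolding coh_l1_def dr dc g_def by (simp add: sum.cartesian_product case_prod_beta)
    also have "\<dots> = (\<Sum>p\<in>A. g p)"
      unfolding A_def by (simp add: sum.inter_filter[symmetric])
    finally show ?thesis .
  qed
  have cardA: "card A = d * d - d"
  proof -
    have "A = ({..<d} \<times> {..<d}) - (\<lambda>i. (i,i)) ` {..<d}" unfolding A_def by auto
    moreover have "card ((\<lambda>i. (i,i)) ` {..<d}) = d"
      by (subst card_image) (auto simp: inj_on_def)
    moreover have "(\<lambda>i. (i,i)) ` {..<d} \<subseteq> {..<d} \<times> {..<d}" by auto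
    ultimately show ?thesis
      using card_Diff_subset[of "(\<lambda>i. (i,i)) ` {..<d}" "{..<d} \<times> {..<d}"]
      by (simp add: card_cartesian_product)
  qed
  have Peq: "P = (\<Sum>i<d. \<Sum>j<d. (cmod (\<rho> $$ (i, j)))\<^sup>2)"
  proof -
    have "P = (\<Sum>i<d. \<Sum>j<d. Re (\<rho> $$ (i, j) * \<rho> $$ (j, i)))"
      unfolding P_def mat_trace_def using car
      by (simp add: scalar_prod_def Re_sum atLeast0LessThan)
    also have "\<dots> = (\<Sum>i<d. \<Sum>j<d. (cmod (\<rho> $$ (i, j)))\<^sup>2)"
    proof (intro sum.cong refl)
      fix i j assume "i \<in> {..<d}" "j \<in> {..<d}"
      then have "\<rho> $$ (j, i) = cnj (\<rho> $$ (i, j))" by (intro hij) auto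
      then show "Re (\<rho> $$ (i, j) * \<rho> $$ (j, i)) = (cmod (\<rho> $$ (i, j)))\<^sup>2"
        by (simp add: cmod_power2 power2_eq_square[of "Re _"] power2_eq_square[of "Im _"])
    qed
    finally show ?thesis .
  qed
  have PSQ: "P = S + Q"
  proof -
    have "P = (\<Sum>p\<in>{..<d}\<times>{..<d}. (g p)\<^sup>2)"
      unfolding Peq g_def by (simp add: sum.cartesian_product case_prod_beta)
    also have "\<dots> = S + (\<Sum>p\<in>(\<lambda>i. (i,i)) ` {..<d}. (g p)\<^sup>2)"
    proof -
      have "{..<d}\<times>{..<d} = A \<union> (\<lambda>i. (i,i)) ` {..<d}" unfolding A_def by auto
      moreover have "A \<inter> (\<lambda>i. (i,i)) ` {..<d} = {}" unfolding A_def by auto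
      ultimately show ?thesis unfolding S_def using finA
        by (simp add: sum.union_disjoint)
    qed
    also have "(\<Sum>p\<in>(\<lambda>i. (i,i)) ` {..<d}. (g p)\<^sup>2) = Q"
      unfolding Q_def
      by (subst sum.reindex) (auto simp: inj_on_def g_def diag intro!: sum.cong)
    finally show ?thesis .
  qed
  have CS: "(coh_l1 \<rho>)\<^sup>2 \<le> real (d * d - d) * S"
    using sum_sq_le_card[OF finA, of g] unfolding cohA S_def cardA .
  have dd: "real (d * d - d) = real d * (real d - 1)"
    using assms(1) by (simp add: of_nat_diff algebra_simps)
  have d1: "real d - 1 > 0" using assms(1) by simp
  have key: "(coh_l1 \<rho>)\<^sup>2 + real d * (real d - 1) * (1 - P) \<le> (real d - 1)\<^sup>2"
  proof -
    have "(coh_l1 \<rho>)\<^sup>2 \<le> real d * (real d - 1) * (P - Q)"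
      using CS dd PSQ by simp
    moreover have "(real d - 1) * 1 \<le> (real d - 1) * (real d * Q)"
      using Qge d1 by (intro mult_left_mono) auto
    ultimately show ?thesis by (simp add: power2_eq_square algebra_simps)
  qed
  have "(coh_l1 \<rho>)\<^sup>2 / (real d - 1)\<^sup>2 + mixedness d \<rho>
      = ((coh_l1 \<rho>)\<^sup>2 + real d * (real d - 1) * (1 - P)) / (real d - 1)\<^sup>2"
  proof -
    have ne: "real d - 1 \<noteq> 0" using d1 by simp
    have "real d / (real d - 1) * (1 - P) = real d * (real d - 1) * (1 - P) / (real d - 1)\<^sup>2"
      using ne by (simp add: power2_eq_square)
    then show ?thesis unfolding mixedness_def P_def[symmetric] by (simp add: add_divide_distrib)
  qed
  also have "\<dots> \<le> 1" using key d1 by simp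
  finally show ?thesis .
qed

end
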